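(* BC, MS and FT satisfy clearance: for every finite candidate set $C$, every profile $P$ over $C$ and every candidate $x\in C$ approved by no ballot of $P$, every axis $\triangleleft\in f(P)$ is such that there is no ballot $A\in P$ and $y,z\in A$ with $y\triangleleft x\triangleleft z$. VD and MF fail clearance: for each $f\in\{\mathrm{VD},\mathrm{MF}\}$ there exist $C$, a profile $P$, a never-approved candidate $x$, an axis $\triangleleft\in f(P)$ and a ballot $A\in P$ with $y,z\in A$ and $y\triangleleft x\triangleleft z$.
   Context: Let $C$ be a finite set of candidates. An approval ballot is a nonempty subset $A\subseteq C$; a profile is a finite sequence of ballots. An axis is a strict linear order $\triangleleft$ on $C$; $a\trianglelefteq b$ means $a\triangleleft b$ or $a=b$. A ballot $A$ is an interval of $\triangleleft$ if for all $a,b\in A$ and every $c$ with $a\triangleleft c\triangleleft b$ we have $c\in A$. For a cost function $\mathrm{cost}_f$, the scoring rule returns $f(P)=\arg\min_{\triangleleft}\sum_{A\in P}\mathrm{cost}_f(A,\triangleleft)$ over all axes on $C$. The five rules are the scoring rules with costs: $\mathrm{cost}_{\mathrm{VD}}(A,\triangleleft)=0$ if $A$ is an interval of $\triangleleft$ and $1$ otherwise; $\mathrm{cost}_{\mathrm{MF}}(A,\triangleleft)=\min_{x,y\in A,\ x\trianglelefteq y}\big(|\{z\in A: z\triangleleft x \text{ or } y\triangleleft z\}|+|\{z\notin A: x\triangleleft z\triangleleft y\}|\big)$; $\mathrm{cost}_{\mathrm{BC}}(A,\triangleleft)=|\{b\notin A: a\triangleleft b\triangleleft c \text{ for some } a,c\in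 A\}|$; $\mathrm{cost}_{\mathrm{MS}}(A,\triangleleft)=\sum_{x\in C\setminus A}\min\big(|\{y\in A:y\triangleleft x\}|,\,|\{y\in A:x\triangleleft y\}|\big)$; $\mathrm{cost}_{\mathrm{FT}}(A,\triangleleft)=\sum_{x\in C\setminus A}|\{y\in A:y\triangleleft x\}|\cdot|\{y\in A:x\triangleleft y\}|$. *)

theory Defs
  imports Main
begin

text \<open>An axis on C is a strict linear order on C, represented as a relation r with
r \<subseteq> C \<times> C; (a,b) \<in> r means a is left of b on the axis.\<close>

definition axes :: "'a set \<Rightarrow> 'a rel set" where
  "axes C = {r. strict_linear_order_on C r \<and> r \<subseteq> C \<times> C}"

definition is_profile :: "'a set \<Rightarrow> 'a set list \<Rightarrow> bool" where
  "is_profile C P \<longleftrightarrow> (\<forall>A\<in>set P. A \<noteq> {} \<and> A \<subseteq> C)"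

definition is_interval :: "'a set \<Rightarrow> 'a rel \<Rightarrow> bool" where
  "is_interval A r \<longleftrightarrow> (\<forall>a\<in>A. \<forall>b\<in>A. \<forall>c. (a,c) \<in> r \<and> (c,b) \<in> r \<longrightarrow> c \<in> A)"

definition cost_VD :: "'a set \<Rightarrow> 'a set \<Rightarrow> 'a rel \<Rightarrow> nat" where
  "cost_VD C A r = (if is_interval A r then 0 else 1)"

definition cost_MF :: "'a set \<Rightarrow> 'a set \<Rightarrow> 'a rel \<Rightarrow> nat" where
  "cost_MF C A r = Min {card {z\<in>A. (z,x) \<in> r \<or> (y,z) \<in> r}
                        + card {z\<in>C. z \<notin> A \<and> (x,z) \<in> r \<and> (z,y) \<in> r}
                       | x y. x \<in> A \<and> y \<in> A \<and> (x = y \<or> (x,y) \<in> r)}"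

definition cost_BC :: "'a set \<Rightarrow> 'a set \<Rightarrow> 'a rel \<Rightarrow> nat" where
  "cost_BC C A r = card {b\<in>C. b \<notin> A \<and> (\<exists>a\<in>A. \<exists>c\<in>A. (a,b) \<in> r \<and> (b,c) \<in> r)}"

definition cost_MS :: "'a set \<Rightarrow> 'a set \<Rightarrow> 'a rel \<Rightarrow> nat" where
  "cost_MS C A r = (\<Sum>x\<in>C - A. min (card {y\<in>A. (y,x) \<in> r}) (card {y\<in>A. (x,y) \<in> r}))"

definition cost_FT :: "'a set \<Rightarrow> 'a set \<Rightarrow> 'a rel \<Rightarrow> nat" where
  "cost_FT C A r = (\<Sum>x\<in>C - A. card {y\<in>A. (y,x) \<in> r} * card {y\<in>A. (x,y) \<in> r})"

definition scoring_rule ::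
  "('a set \<Rightarrow> 'a set \<Rightarrow> 'a rel \<Rightarrow> nat) \<Rightarrow> 'a set \<Rightarrow> 'a set list \<Rightarrow> 'a rel set" where
  "scoring_rule cost C P =
     {r \<in> axes C. \<forall>r' \<in> axes C.
        (\<Sum>A\<leftarrow>P. cost C A r) \<le> (\<Sum>A\<leftarrow>P. cost C A r')}"

definition clearance :: "('a set \<Rightarrow> 'a set \<Rightarrow> 'a rel \<Rightarrow> nat) \<Rightarrow> bool" where
  "clearance cost \<longleftrightarrow>
     (\<forall>C P x. finite C \<and> is_profile C P \<and> x \<in> C \<and> (\<forall>A\<in>set P. x \<notin> A) \<longrightarrow>
        (\<forall>r \<in> scoring_rule cost C P.
           \<not> (\<exists>A\<in>set P. \<exists>y\<in>A. \<exists>z\<in>A. (y,x) \<in> r \<and> (x,z) \<in> r)))"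

end

theory Submission
  imports Defs
begin

definition mv :: "'a set \<Rightarrow> 'a \<Rightarrow> 'a rel \<Rightarrow> 'a rel" where
  "mv C x r = {(u,v). (u,v) \<in> r \<and> u \<noteq> x \<and> v \<noteq> x} \<union> {(x,v) | v. v \<in> C \<and> v \<noteq> x}"

lemma mv_axes:
  assumes "r \<in> axes C" "x \<in> C"
  shows "mv C x r \<in> axes C"
  using assms unfolding axes_def strict_linear_order_on_def mv_def trans_def irrefl_def total_on_def
  by blast

lemma mv_left:
  assumes "b \<noteq> x" "y \<noteq> x"
  shows "(y,b) \<in> mv C x r \<longleftrightarrow> (y,b) \<in> r" "(b,y) \<in> mv C x r \<longleftrightarrow> (b,y) \<in> r"
  using assms unfolding mv_def by auto

lemma mv_x: "(y,x) \<notin> mv C x r"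
  unfolding mv_def by auto

lemma sum_list_strict:
  assumes "\<forall>a\<in>set P. (f a :: nat) \<le> g a" "a \<in> set P" "f a < g a"
  shows "(\<Sum>A\<leftarrow>P. f A) < (\<Sum>A\<leftarrow>P. g A)"
  using assms
proof (induction P)
  case Nil then show ?case by simp
next
  case (Cons b P)
  show ?case
  proof (cases "a = b")
    case True
    have "(\<Sum>A\<leftarrow>P. f A) \<le> (\<Sum>A\<leftarrow>P. g A)"
      using Cons.prems(1) by (intro sum_list_mono) auto
    then show ?thesis using Cons.prems True by simp
  next
    case False
    then have "(\<Sum>A\<leftarrow>P. f A) < (\<Sum>A\<leftarrow>P. g A)" using Cons by auto
    then show ?thesis using Cons.prems(1) by (simp add: add_le_less_mono)
  qed
qed

lemma clearance_generic:
  assumes mono: "\<And>C B x r. finite C \<Longrightarrow> r \<in> axes C \<Longrightarrow> x \<in> C \<Longrightarrow> B \<subseteq> C \<Longrightarrow> x \<notin> B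
      \<Longrightarrow> cost C B (mv C x r) \<le> cost C B r"
  and strict: "\<And>C B x r y z. finite C \<Longrightarrow> r \<in> axes C \<Longrightarrow> x \<in> C \<Longrightarrow> B \<subseteq> C \<Longrightarrow> x \<notin> B
      \<Longrightarrow> y \<in> B \<Longrightarrow> z \<in> B \<Longrightarrow> (y,x) \<in> r \<Longrightarrow> (x,z) \<in> r
      \<Longrightarrow> cost C B (mv C x r) < cost C B r"
  shows "clearance cost"
  unfolding clearance_def
proof (intro allI impI ballI notI)
  fix C P x r
  assume h: "finite C \<and> is_profile C P \<and> x \<in> C \<and> (\<forall>A\<in>set P. x \<notin> A)"
    and r: "r \<in> scoring_rule cost C P"
    and e: "\<exists>A\<in>set P. \<exists>y\<in>A. \<exists>z\<in>A. (y, x) \<in> r \<and> (x, z) \<in> r"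
  from r have ra: "r \<in> axes C" and opt: "\<forall>r'\<in>axes C. (\<Sum>A\<leftarrow>P. cost C A r) \<le> (\<Sum>A\<leftarrow>P. cost C A r')"
    unfolding scoring_rule_def by auto
  have xC: "x \<in> C" using h by simp
  have ma: "mv C x r \<in> axes C" by (rule mv_axes[OF ra xC])
  from e obtain A y z where A: "A \<in> set P" "y \<in> A" "z \<in> A" "(y,x) \<in> r" "(x,z) \<in> r" by blast
  have sub: "\<And>B. B \<in> set P \<Longrightarrow> B \<subseteq> C" using h unfolding is_profile_def by auto
  have "(\<Sum>B\<leftarrow>P. cost C B (mv C x r)) < (\<Sum>B\<leftarrow>P. cost C B r)"
  proof (rule sum_list_strict[where a=A])
    show "\<forall>a\<in>set P. cost C a (mv C x r) \<le> cost C a r"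
      using mono[of C r x] h ra sub by blast
    show "A \<in> set P" by (rule A(1))
    show "cost C A (mv C x r) < cost C A r"
      using strict[of C r x A y z] h ra sub A by blast
  qed
  with opt ma show False by fastforce
qed


lemma BC_mono:
  assumes "finite C" "r \<in> axes C" "x \<in> C" "B \<subseteq> C" "x \<notin> B"
  shows "{b\<in>C. b \<notin> B \<and> (\<exists>a\<in>B. \<exists>c\<in>B. (a,b) \<in> mv C x r \<and> (b,c) \<in> mv C x r)}
       = {b\<in>C. b \<notin> B \<and> (\<exists>a\<in>B. \<exists>c\<in>B. (a,b) \<in> r \<and> (b,c) \<in> r)} - {x}"
  using assms unfolding mv_def by auto

lemma BC_ok: "clearance cost_BC"
proof (rule clearance_generic)
  fix C B x r
  assume a: "finite C" "r \<in> axes C" "x \<in> C" "B \<subseteq> C" "x \<notin> B"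
  show "cost_BC C B (mv C x r) \<le> cost_BC C B r"
    unfolding cost_BC_def BC_mono[OF a] using a(1) by (intro card_mono) auto
next
  fix C B x r y z
  assume a: "finite C" "r \<in> axes C" "x \<in> C" "B \<subseteq> C" "x \<notin> B"
    and b: "y \<in> B" "z \<in> B" "(y,x) \<in> r" "(x,z) \<in> r"
  show "cost_BC C B (mv C x r) < cost_BC C B r"
    unfolding cost_BC_def BC_mono[OF a] using a b by (intro card_Diff1_less) auto
qed

lemma card_cong_mv:
  assumes "b \<noteq> x" "x \<notin> B"
  shows "card {y\<in>B. (y,b) \<in> mv C x r} = card {y\<in>B. (y,b) \<in> r}"
        "card {y\<in>B. (b,y) \<in> mv C x r} = card {y\<in>B. (b,y) \<in> r}"
proof -
  have "{y\<in>B. (y,b) \<in> mv C x r} = {y\<in>B. (y,b) \<in> r}" "{y\<in>B. (b,y) \<in> mv C x r} = {y\<in>B. (b,y) \<in> r}"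
    using assms unfolding mv_def by auto
  then show "card {y\<in>B. (y,b) \<in> mv C x r} = card {y\<in>B. (y,b) \<in> r}"
        "card {y\<in>B. (b,y) \<in> mv C x r} = card {y\<in>B. (b,y) \<in> r}" by auto
qed

lemma card_x_mv: "card {y\<in>B. (y,x) \<in> mv C x r} = 0"
  using mv_x[of _ x C r] by simp

lemma pos_card:
  assumes "finite C" "B \<subseteq> C" "y \<in> B" "P y"
  shows "0 < card {y\<in>B. P y}"
proof -
  have "finite B" using assms finite_subset by blast
  then show ?thesis using assms by (subst card_gt_0_iff) auto
qed

lemma MS_ok: "clearance cost_MS"
proof (rule clearance_generic)
  fix C B x r
  assume a: "finite C" "r \<in> axes C" "x \<in> C" "B \<subseteq> C" "x \<notin> B"
  show "cost_MS C B (mv C x r) \<le> cost_MS C B r"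
    unfolding cost_MS_def
  proof (rule sum_mono)
    fix b assume "b \<in> C - B"
    show "min (card {y \<in> B. (y, b) \<in> mv C x r}) (card {y \<in> B. (b, y) \<in> mv C x r})
         \<le> min (card {y \<in> B. (y, b) \<in> r}) (card {y \<in> B. (b, y) \<in> r})"
      using card_cong_mv[of b x B C r] card_x_mv[of B x C r] a by (cases "b = x") auto
  qed
next
  fix C B x r y z
  assume a: "finite C" "r \<in> axes C" "x \<in> C" "B \<subseteq> C" "x \<notin> B"
    and b: "y \<in> B" "z \<in> B" "(y,x) \<in> r" "(x,z) \<in> r"
  show "cost_MS C B (mv C x r) < cost_MS C B r"
    unfolding cost_MS_def
  proof (rule sum_strict_mono_ex1)
    show "finite (C - B)" using a by simp
    show "\<forall>b\<in>C - B. min (card {y \<in> B. (y, b) \<in> mv C x r}) (card {y \<in> B. (b, y) \<in> mv C x r})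
         \<le> min (card {y \<in> B. (y, b) \<in> r}) (card {y \<in> B. (b, y) \<in> r})"
      apply (intro ballI)
      subgoal for b using card_cong_mv[of b x B C r] card_x_mv[of B x C r] a by (cases "b = x") auto
      done
    have "0 < card {y \<in> B. (y, x) \<in> r}" using pos_card[of C B y "\<lambda>y. (y,x) \<in> r"] a b by blast
    moreover have "0 < card {y \<in> B. (x, y) \<in> r}" using pos_card[of C B z "\<lambda>y. (x,y) \<in> r"] a b by blast
    ultimately show "\<exists>b\<in>C - B. min (card {y \<in> B. (y, b) \<in> mv C x r}) (card {y \<in> B. (b, y) \<in> mv C x r})
         < min (card {y \<in> B. (y, b) \<in> r}) (card {y \<in> B. (b, y) \<in> r})"
      using a card_x_mv[of B x C r] by (intro bexI[of _ x]) auto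
  qed
qed

lemma FT_ok: "clearance cost_FT"
proof (rule clearance_generic)
  fix C B x r
  assume a: "finite C" "r \<in> axes C" "x \<in> C" "B \<subseteq> C" "x \<notin> B"
  show "cost_FT C B (mv C x r) \<le> cost_FT C B r"
    unfolding cost_FT_def
  proof (rule sum_mono)
    fix b assume "b \<in> C - B"
    show "card {y \<in> B. (y, b) \<in> mv C x r} * card {y \<in> B. (b, y) \<in> mv C x r}
         \<le> card {y \<in> B. (y, b) \<in> r} * card {y \<in> B. (b, y) \<in> r}"
      using card_cong_mv[of b x B C r] card_x_mv[of B x C r] a by (cases "b = x") auto
  qed
next
  fix C B x r y z
  assume a: "finite C" "r \<in> axes C" "x \<in> C" "B \<subseteq> C" "x \<notin> B"
    and b: "y \<in> B" "z \<in> B" "(y,x) \<in> r" "(x,z) \<in> r"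
  show "cost_FT C B (mv C x r) < cost_FT C B r"
    unfolding cost_FT_def
  proof (rule sum_strict_mono_ex1)
    show "finite (C - B)" using a by simp
    show "\<forall>b\<in>C - B. card {y \<in> B. (y, b) \<in> mv C x r} * card {y \<in> B. (b, y) \<in> mv C x r}
         \<le> card {y \<in> B. (y, b) \<in> r} * card {y \<in> B. (b, y) \<in> r}"
      apply (intro ballI)
      subgoal for b using card_cong_mv[of b x B C r] card_x_mv[of B x C r] a by (cases "b = x") auto
      done
    have "0 < card {y \<in> B. (y, x) \<in> r}" using pos_card[of C B y "\<lambda>y. (y,x) \<in> r"] a b by blast
    moreover have "0 < card {y \<in> B. (x, y) \<in> r}" using pos_card[of C B z "\<lambda>y. (x,y) \<in> r"] a b by blast
    ultimately show "\<exists>b\<in>C - B. card {y \<in> B. (y, b) \<in> mv C x r} * card {y \<in> B. (b, y) \<in> mv C x r}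
         < card {y \<in> B. (y, b) \<in> r} * card {y \<in> B. (b, y) \<in> r}"
      using a card_x_mv[of B x C r] by (intro bexI[of _ x]) auto
  qed
qed

definition C0 :: "nat set" where "C0 = {0,1,2,3,4}"
definition P0 :: "nat set list" where "P0 = [{0,1},{0,2},{0,3}]"
definition r0 :: "nat rel" where
  "r0 = {(1,0),(1,2),(1,4),(1,3),(0,2),(0,4),(0,3),(2,4),(2,3),(4,3)}"

lemma r0_axes: "r0 \<in> axes C0"
  unfolding axes_def strict_linear_order_on_def trans_def irrefl_def total_on_def r0_def C0_def
  by auto

lemma ex_sub: "\<exists>i\<in>I. P i \<Longrightarrow> I \<subseteq> J \<Longrightarrow> \<exists>i\<in>J. P i" by blast

lemma same_side:
  fixes r :: "nat rel"
  assumes o: "(a,b) \<in> r \<or> (b,a) \<in> r" and ne: "a \<noteq> b" "a \<noteq> 0" "b \<noteq> 0" "a \<in> C0" "b \<in> C0"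
  shows "(0,a) \<in> r \<Longrightarrow> (0,b) \<in> r \<Longrightarrow> \<exists>i\<in>{a,b}. \<exists>c\<in>C0. c \<notin> {0,i} \<and> ((0,c)\<in>r \<and> (c,i)\<in>r \<or> (i,c)\<in>r \<and> (c,0)\<in>r)"
    and "(a,0) \<in> r \<Longrightarrow> (b,0) \<in> r \<Longrightarrow> \<exists>i\<in>{a,b}. \<exists>c\<in>C0. c \<notin> {0,i} \<and> ((0,c)\<in>r \<and> (c,i)\<in>r \<or> (i,c)\<in>r \<and> (c,0)\<in>r)"
proof -
  show "(0,a) \<in> r \<Longrightarrow> (0,b) \<in> r \<Longrightarrow> \<exists>i\<in>{a,b}. \<exists>c\<in>C0. c \<notin> {0,i} \<and> ((0,c)\<in>r \<and> (c,i)\<in>r \<or> (i,c)\<in>r \<and> (c,0)\<in>r)"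
  proof -
    assume h: "(0,a) \<in> r" "(0,b) \<in> r"
    from o show ?thesis
    proof
      assume "(a,b) \<in> r" then show ?thesis using h ne by (intro bexI[of _ b] bexI[of _ a]) auto
    next
      assume "(b,a) \<in> r" then show ?thesis using h ne by (intro bexI[of _ a] bexI[of _ b]) auto
    qed
  qed
  show "(a,0) \<in> r \<Longrightarrow> (b,0) \<in> r \<Longrightarrow> \<exists>i\<in>{a,b}. \<exists>c\<in>C0. c \<notin> {0,i} \<and> ((0,c)\<in>r \<and> (c,i)\<in>r \<or> (i,c)\<in>r \<and> (c,0)\<in>r)"
  proof -
    assume h: "(a,0) \<in> r" "(b,0) \<in> r"
    from o show ?thesis
    proof
      assume "(a,b) \<in> r" then show ?thesis using h ne by (intro bexI[of _ a] bexI[of _ b]) auto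
    next
      assume "(b,a) \<in> r" then show ?thesis using h ne by (intro bexI[of _ b] bexI[of _ a]) auto
    qed
  qed
qed

lemma star_lemma:
  fixes r :: "nat rel"
  assumes "r \<in> axes C0"
  shows "\<exists>i\<in>{1,2,3::nat}. \<exists>c\<in>C0. c \<notin> {0,i} \<and> ((0,c)\<in>r \<and> (c,i)\<in>r \<or> (i,c)\<in>r \<and> (c,0)\<in>r)"
proof -
  have tot: "total_on C0 r" using assms unfolding axes_def strict_linear_order_on_def by auto
  have C: "(0::nat) \<in> C0" "(1::nat) \<in> C0" "(2::nat) \<in> C0" "(3::nat) \<in> C0" unfolding C0_def by auto
  have o: "\<And>a b. a \<in> C0 \<Longrightarrow> b \<in> C0 \<Longrightarrow> a \<noteq> b \<Longrightarrow> (a,b) \<in> r \<or> (b,a) \<in> r"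
    using tot unfolding total_on_def by blast
  have o01: "(0,1) \<in> r \<or> (1,0) \<in> r" using o C by simp
  have o02: "(0,2) \<in> r \<or> (2,0) \<in> r" using o C by simp
  have o03: "(0,3) \<in> r \<or> (3,0) \<in> r" using o C by simp
  have o12: "(1,2) \<in> r \<or> (2,1) \<in> r" using o C by simp
  have o13: "(1,3) \<in> r \<or> (3,1) \<in> r" using o C by simp
  have o23: "(2,3) \<in> r \<or> (3,2) \<in> r" using o C by simp
  have n: "(1::nat) \<noteq> 2" "(1::nat) \<noteq> 3" "(2::nat) \<noteq> 3" "(1::nat) \<noteq> 0" "(2::nat) \<noteq> 0" "(3::nat) \<noteq> 0" by auto
  note s12 = same_side[OF o12 n(1) n(4) n(5) C(2) C(3)]
  note s13 = same_side[OF o13 n(2) n(4) n(6) C(2) C(4)]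
  note s23 = same_side[OF o23 n(3) n(5) n(6) C(3) C(4)]
  have sub1: "{1,2} \<subseteq> {1,2,3::nat}" "{1,3} \<subseteq> {1,2,3::nat}" "{2,3} \<subseteq> {1,2,3::nat}" by auto
  from o01 o02 o03 show ?thesis
  proof (elim disjE)
    assume h: "(0,1) \<in> r" "(0,2) \<in> r" show ?thesis using s12(1)[OF h(1) h(2)] sub1(1) by (rule ex_sub)
  next
    assume h: "(0,1) \<in> r" "(0,2) \<in> r" show ?thesis using s12(1)[OF h(1) h(2)] sub1(1) by (rule ex_sub)
  next
    assume h: "(0,1) \<in> r" "(2,0) \<in> r" "(0,3) \<in> r" show ?thesis using s13(1)[OF h(1) h(3)] sub1(2) by (rule ex_sub)
  next
    assume h: "(0,1) \<in> r" "(2,0) \<in> r" "(3,0) \<in> r" show ?thesis using s23(2)[OF h(2) h(3)] sub1(3) by (rule ex_sub)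
  next
    assume h: "(1,0) \<in> r" "(0,2) \<in> r" "(0,3) \<in> r" show ?thesis using s23(1)[OF h(2) h(3)] sub1(3) by (rule ex_sub)
  next
    assume h: "(1,0) \<in> r" "(0,2) \<in> r" "(3,0) \<in> r" show ?thesis using s13(2)[OF h(1) h(3)] sub1(2) by (rule ex_sub)
  next
    assume h: "(1,0) \<in> r" "(2,0) \<in> r" show ?thesis using s12(2)[OF h(1) h(2)] sub1(1) by (rule ex_sub)
  next
    assume h: "(1,0) \<in> r" "(2,0) \<in> r" show ?thesis using s12(2)[OF h(1) h(2)] sub1(1) by (rule ex_sub)
  qed
qed

lemma MF_fin:
  assumes "finite A"
  shows "finite {card {z\<in>A. (z,x) \<in> r \<or> (y,z) \<in> r}
                        + card {z\<in>C. z \<notin> A \<and> (x,z) \<in> r \<and> (z,y) \<in> r}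
                       | x y. x \<in> A \<and> y \<in> A \<and> (x = y \<or> (x,y) \<in> r)}" (is "finite ?S")
proof -
  have "?S \<subseteq> (\<lambda>(x,y). card {z\<in>A. (z,x) \<in> r \<or> (y,z) \<in> r}
                        + card {z\<in>C. z \<notin> A \<and> (x,z) \<in> r \<and> (z,y) \<in> r}) ` (A \<times> A)" by auto
  then show ?thesis using assms finite_subset by blast
qed

lemma MF_le:
  assumes "finite A" "x \<in> A" "y \<in> A" "x = y \<or> (x,y) \<in> r"
  shows "cost_MF C A r \<le> card {z\<in>A. (z,x) \<in> r \<or> (y,z) \<in> r}
                        + card {z\<in>C. z \<notin> A \<and> (x,z) \<in> r \<and> (z,y) \<in> r}"
  unfolding cost_MF_def using assms by (intro Min_le MF_fin) auto

lemma mem_card_pos: "finite S \<Longrightarrow> v \<in> S \<Longrightarrow> 0 < card S"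
  by (auto simp: card_gt_0_iff)

lemma pair_VD:
  assumes "(a,c) \<in> r" "(c,b) \<in> r" "c \<notin> {a,b}"
  shows "cost_VD C {a,b} r = 1"
  using assms unfolding cost_VD_def is_interval_def by auto

lemma pair_MF_elem:
  assumes fin: "finite C" and ab: "(a,b) \<in> r" and ac: "(a,c) \<in> r" and cb: "(c,b) \<in> r"
    and c: "c \<notin> {a,b}" and cC: "c \<in> C" and ba: "(b,a) \<notin> r"
    and x: "x \<in> {a,b}" and y: "y \<in> {a,b}" and xy: "x = y \<or> (x,y) \<in> r"
  shows "1 \<le> card {z\<in>{a,b}. (z,x) \<in> r \<or> (y,z) \<in> r} + card {z\<in>C. z \<notin> {a,b} \<and> (x,z) \<in> r \<and> (z,y) \<in> r}"
proof -
  have f1: "finite {z\<in>{a,b}. (z,x) \<in> r \<or> (y,z) \<in> r}" by simp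
  have f2: "finite {z\<in>C. z \<notin> {a,b} \<and> (x,z) \<in> r \<and> (z,y) \<in> r}" using fin by simp
  have "b \<in> {z\<in>{a,b}. (z,x) \<in> r \<or> (y,z) \<in> r} \<or> a \<in> {z\<in>{a,b}. (z,x) \<in> r \<or> (y,z) \<in> r}
      \<or> c \<in> {z\<in>C. z \<notin> {a,b} \<and> (x,z) \<in> r \<and> (z,y) \<in> r}"
  proof -
    have "x = a \<or> x = b" "y = a \<or> y = b" using x y by auto
    then consider "y = a" | "x = b" | "x = a" "y = b" by blast
    then show ?thesis
    proof cases
      case 1 then show ?thesis using ab by blast
    next
      case 2 then show ?thesis using ab by blast
    next
      case 3 then show ?thesis using ac cb c cC by blast
    qed
  qed
  then have "0 < card {z\<in>{a,b}. (z,x) \<in> r \<or> (y,z) \<in> r} \<or> 0 < card {z\<in>C. z \<notin> {a,b} \<and> (x,z) \<in> r \<and> (z,y) \<in> r}"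
    using mem_card_pos[OF f1, of b] mem_card_pos[OF f1, of a] mem_card_pos[OF f2, of c] by argo
  then show ?thesis by linarith
qed

lemma pair_MF:
  assumes ax: "r \<in> axes C" and fin: "finite C" and ac: "(a,c) \<in> r" and cb: "(c,b) \<in> r" and c: "c \<notin> {a,b}"
  shows "1 \<le> cost_MF C {a,b} r"
proof -
  have t: "trans r" and ir: "irrefl r" and sub: "r \<subseteq> C \<times> C"
    using ax unfolding axes_def strict_linear_order_on_def by auto
  have ab: "(a,b) \<in> r" using t ac cb unfolding trans_def by blast
  have ba: "(b,a) \<notin> r" using t ir ab unfolding trans_def irrefl_def by blast
  have cC: "c \<in> C" using sub ac by auto
  show ?thesis unfolding cost_MF_def
    apply (rule Min.boundedI)
      apply (rule MF_fin, simp)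
     apply blast
    apply (elim CollectE exE conjE)
    using pair_MF_elem[OF fin ab ac cb c cC ba] by simp
qed

lemma sum_P0: "(\<Sum>A\<leftarrow>P0. f A) = f {0,1} + f {0,2} + f {0,3}"
  unfolding P0_def by (simp add: add.assoc)

lemma r0_VD: "(\<Sum>A\<leftarrow>P0. cost_VD C0 A r0) = 1"
proof -
  have "cost_VD C0 {0,1} r0 = 0" unfolding cost_VD_def is_interval_def r0_def by auto
  moreover have "cost_VD C0 {0,2} r0 = 0" unfolding cost_VD_def is_interval_def r0_def by auto
  moreover have "cost_VD C0 {0,3} r0 = 1" by (rule pair_VD[of _ 2]) (auto simp: r0_def)
  ultimately show ?thesis unfolding sum_P0 by simp
qed

lemma r0_MF: "(\<Sum>A\<leftarrow>P0. cost_MF C0 A r0) \<le> 1"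
proof -
  have e1: "{z\<in>{0,1}. (z,1) \<in> r0 \<or> (0,z) \<in> r0} = {}" "{z\<in>C0. z \<notin> {0,1} \<and> (1,z) \<in> r0 \<and> (z,0) \<in> r0} = {}"
    unfolding r0_def C0_def by auto
  have "cost_MF C0 {0,1} r0 \<le> card {z\<in>{0,1}. (z,1) \<in> r0 \<or> (0,z) \<in> r0} + card {z\<in>C0. z \<notin> {0,1} \<and> (1,z) \<in> r0 \<and> (z,0) \<in> r0}"
    by (rule MF_le) (auto simp: r0_def)
  then have "cost_MF C0 {0,1} r0 \<le> 0" unfolding e1 by simp
  moreover have e2: "{z\<in>{0,2}. (z,0) \<in> r0 \<or> (2,z) \<in> r0} = {}" "{z\<in>C0. z \<notin> {0,2} \<and> (0,z) \<in> r0 \<and> (z,2) \<in> r0} = {}"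
    unfolding r0_def C0_def by auto
  have "cost_MF C0 {0,2} r0 \<le> card {z\<in>{0,2}. (z,0) \<in> r0 \<or> (2,z) \<in> r0} + card {z\<in>C0. z \<notin> {0,2} \<and> (0,z) \<in> r0 \<and> (z,2) \<in> r0}"
    by (rule MF_le) (auto simp: r0_def)
  then have "cost_MF C0 {0,2} r0 \<le> 0" unfolding e2 by simp
  moreover have e3: "{z\<in>{0,3}. (z,0) \<in> r0 \<or> (0,z) \<in> r0} = {3}" "{z\<in>C0. z \<notin> {0,3} \<and> (0,z) \<in> r0 \<and> (z,0) \<in> r0} = {}"
    unfolding r0_def C0_def by auto
  have "cost_MF C0 {0,3} r0 \<le> card {z\<in>{0,3}. (z,0) \<in> r0 \<or> (0,z) \<in> r0} + card {z\<in>C0. z \<notin> {0,3} \<and> (0,z) \<in> r0 \<and> (z,0) \<in> r0}"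
    by (rule MF_le) (auto simp: r0_def)
  then have "cost_MF C0 {0,3} r0 \<le> 1" unfolding e3 by simp
  ultimately show ?thesis unfolding sum_P0 by simp
qed

lemma finC0: "finite C0" unfolding C0_def by simp

lemma lower_gen:
  fixes cost :: "nat set \<Rightarrow> nat set \<Rightarrow> nat rel \<Rightarrow> nat"
  assumes r: "r \<in> axes C0"
    and pair: "\<And>a b c. (a,c) \<in> r \<Longrightarrow> (c,b) \<in> r \<Longrightarrow> c \<notin> {a,b} \<Longrightarrow> 1 \<le> cost C0 {a,b} r"
  shows "1 \<le> (\<Sum>A\<leftarrow>P0. cost C0 A r)"
proof -
  obtain i c where i: "i \<in> {1,2,3::nat}" and c: "c \<notin> {0,i}"
    and o: "(0,c)\<in>r \<and> (c,i)\<in>r \<or> (i,c)\<in>r \<and> (c,0)\<in>r"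
    using star_lemma[OF r] by blast
  have "1 \<le> cost C0 {0,i} r"
    using o
  proof
    assume "(0,c)\<in>r \<and> (c,i)\<in>r" then show ?thesis using pair[of 0 c i] c by blast
  next
    assume "(i,c)\<in>r \<and> (c,0)\<in>r" then have "1 \<le> cost C0 {i,0} r" using pair[of i c 0] c by blast
    then show ?thesis by (simp add: insert_commute)
  qed
  moreover have "cost C0 {0,i} r \<le> cost C0 {0,1} r + cost C0 {0,2} r + cost C0 {0,3} r"
    using i by (elim insertE emptyE) simp_all
  ultimately show ?thesis unfolding sum_P0 by linarith
qed

lemma prof0: "finite C0 \<and> is_profile C0 P0 \<and> (4::nat) \<in> C0 \<and> (\<forall>A\<in>set P0. 4 \<notin> A)"
  unfolding C0_def P0_def is_profile_def by auto

lemma between0: "\<exists>A\<in>set P0. \<exists>y\<in>A. \<exists>z\<in>A. (y, 4) \<in> r0 \<and> (4, z) \<in> r0"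
  unfolding P0_def r0_def by auto

lemma VD_fail: "\<not> clearance (cost_VD :: nat set \<Rightarrow> nat set \<Rightarrow> nat rel \<Rightarrow> nat)"
proof
  assume cl: "clearance (cost_VD :: nat set \<Rightarrow> nat set \<Rightarrow> nat rel \<Rightarrow> nat)"
  have "\<forall>r'\<in>axes C0. (\<Sum>A\<leftarrow>P0. cost_VD C0 A r0) \<le> (\<Sum>A\<leftarrow>P0. cost_VD C0 A r')"
  proof
    fix r' assume r': "r' \<in> axes C0"
    have "1 \<le> (\<Sum>A\<leftarrow>P0. cost_VD C0 A r')"
      by (rule lower_gen[OF r']) (simp add: pair_VD)
    then show "(\<Sum>A\<leftarrow>P0. cost_VD C0 A r0) \<le> (\<Sum>A\<leftarrow>P0. cost_VD C0 A r')" using r0_VD by linarith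
  qed
  then have sr: "r0 \<in> scoring_rule cost_VD C0 P0"
    unfolding scoring_rule_def using r0_axes by blast
  note h = cl[unfolded clearance_def, THEN spec[of _ C0], THEN spec[of _ P0], THEN spec[of _ 4]]
  have "\<forall>r\<in>scoring_rule cost_VD C0 P0. \<not> (\<exists>A\<in>set P0. \<exists>y\<in>A. \<exists>z\<in>A. (y, 4) \<in> r \<and> (4, z) \<in> r)"
    by (rule mp[OF h prof0])
  then have "\<not> (\<exists>A\<in>set P0. \<exists>y\<in>A. \<exists>z\<in>A. (y, 4) \<in> r0 \<and> (4, z) \<in> r0)"
    using sr by (rule bspec)
  then show False using between0 by contradiction
qed

lemma MF_fail: "\<not> clearance (cost_MF :: nat set \<Rightarrow> nat set \<Rightarrow> nat rel \<Rightarrow> nat)"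
proof
  assume cl: "clearance (cost_MF :: nat set \<Rightarrow> nat set \<Rightarrow> nat rel \<Rightarrow> nat)"
  have "\<forall>r'\<in>axes C0. (\<Sum>A\<leftarrow>P0. cost_MF C0 A r0) \<le> (\<Sum>A\<leftarrow>P0. cost_MF C0 A r')"
  proof
    fix r' assume r': "r' \<in> axes C0"
    have "1 \<le> (\<Sum>A\<leftarrow>P0. cost_MF C0 A r')"
      by (rule lower_gen[OF r']) (rule pair_MF[OF r' finC0])
    then show "(\<Sum>A\<leftarrow>P0. cost_MF C0 A r0) \<le> (\<Sum>A\<leftarrow>P0. cost_MF C0 A r')" using r0_MF by linarith
  qed
  then have sr: "r0 \<in> scoring_rule cost_MF C0 P0"
    unfolding scoring_rule_def using r0_axes by blast
  note h = cl[unfolded clearance_def, THEN spec[of _ C0], THEN spec[of _ P0], THEN spec[of _ 4]]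
  have "\<forall>r\<in>scoring_rule cost_MF C0 P0. \<not> (\<exists>A\<in>set P0. \<exists>y\<in>A. \<exists>z\<in>A. (y, 4) \<in> r \<and> (4, z) \<in> r)"
    by (rule mp[OF h prof0])
  then have "\<not> (\<exists>A\<in>set P0. \<exists>y\<in>A. \<exists>z\<in>A. (y, 4) \<in> r0 \<and> (4, z) \<in> r0)"
    using sr by (rule bspec)
  then show False using between0 by contradiction
qed

theorem mainTheorem7:
  shows "clearance (cost_BC :: 'a set \<Rightarrow> 'a set \<Rightarrow> 'a rel \<Rightarrow> nat)
       \<and> clearance (cost_MS :: 'a set \<Rightarrow> 'a set \<Rightarrow> 'a rel \<Rightarrow> nat)
       \<and> clearance (cost_FT :: 'a set \<Rightarrow> 'a set \<Rightarrow> 'a rel \<Rightarrow> nat)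
       \<and> \<not> clearance (cost_VD :: nat set \<Rightarrow> nat set \<Rightarrow> nat rel \<Rightarrow> nat)
       \<and> \<not> clearance (cost_MF :: nat set \<Rightarrow> nat set \<Rightarrow> nat rel \<Rightarrow> nat)"
  using BC_ok MS_ok FT_ok VD_fail MF_fail by blast

end
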